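(* Consider the semantic collaboration (SC) methodology described in the context. Every program that satisfies the proof obligations of SC (every class invariant is admissible, and every heap update instruction executed by the program is executed in a state satisfying its precondition) satisfies, in every reachable heap, both $$\forall o:\ o.\mathit{closed}\Rightarrow o.\mathit{inv}\qquad\text{(G1)}$$ and $$\forall o,p:\ p.\mathit{closed}\wedge o\in p.\mathit{owns}\Rightarrow o.\mathit{closed}\wedge o.\mathit{owner}=p.\qquad\text{(G2)}$$
   Context: Programs are collections of classes; every object is equipped with built-in ghost attributes $\mathit{closed}$ (Boolean), $\mathit{owner}$ (object), and sets of objects $\mathit{owns}$, $\mathit{subjects}$, $\mathit{observers}$, besides its class-specific attributes. Shorthands: $o.\mathit{open}$ means $\neg o.\mathit{closed}$; $o.\mathit{free}$ means $o.\mathit{owner}.\mathit{open}$; $o.\mathit{wrapped}$ means $o.\mathit{closed}\wedge o.\mathit{free}$. A special object $\mathit{Void}$ is always allocated and open; initially it is the only allocated object. Every class has an invariant $\mathit{inv}$ (a Boolean expression over $\mathit{Current}$, the object it is evaluated on). The read set $\mathrm{reads}(e)$ of an expression $e$ is the set of objects whose attributes $e$ reads: $\mathrm{reads}(x.a)=\{x\}$, for a call to a logical (side-effect free) function it is given by that function's read clause, and for compound expressions it is the union over subexpressions; the value of $e$ depends only on the attributes of objects in $\mathrm{reads}(e)$. Each attribute $a$ has an update guard $\mathrm{guard}(s.a := y, o)$, a Boolean expression over the updated object $s$, the new value $y$, and a generic observer $o$. For a heap $h$, $e_h$ is the value of $e$ in $h$, and $h[x.a\mapsto y]$ is $h$ with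 $x.a$ changed to $y$; $\mathsf{H}$ is the current heap. An invariant $\mathit{inv}$ is admissible iff: (A1) $\mathit{inv}\Rightarrow \mathrm{reads}(\mathit{inv})\subseteq \{\mathit{Current}\}\cup\mathit{owns}\cup\mathit{subjects}$; (A2) $\mathit{inv}\Rightarrow \forall s: s\in\mathit{subjects}\Rightarrow \mathit{Current}\in s.\mathit{observers}$; (A3) $\forall s,a,y:\ s\in\mathit{subjects}\wedge\mathit{inv}\wedge \mathrm{guard}(s.a:=y,\mathit{Current})\Rightarrow \mathit{inv}_{\mathsf{H}[s.a\mapsto y]}$; (A4) $\mathit{inv}$ does not mention the attributes $\mathit{closed}$ and $\mathit{owner}$, directly or through the definitions of logical functions it uses. Heap update instructions (each modifies only the objects/attributes mentioned in its postcondition): allocation $\mathbf{create}\ x$: precondition True; postcondition $x.\mathit{open}\wedge x.\mathit{owner}=\mathit{Void}\wedge x.\mathit{observers}=\{\}$. Unwrapping $x.\mathit{unwrap}$: precondition $x.\mathit{wrapped}$; postcondition $x.\mathit{open}$. Attribute update $x.a:=y$ for $a\neq\mathit{closed}$ (and $a\ne\mathit{owner}$): preconditions $x.\mathit{open}$ and $\forall o\in x.\mathit{observers}: o.\mathit{open}\vee\mathrm{guard}(x.a:=y,o)$; postcondition $x.a=y$. Wrapping $x.\mathit{wrap}$: preconditions $x.\mathit{open}$, $x.\mathit{inv}$, and $\forall o\in x.\mathit{owns}: o.\mathit{wrapped}$; postconditions $x.\mathit{wrapped}$ and $\forall o\in x.\mathit{owns}: o.\mathit{owner}=x$ (it first sets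 the $\mathit{owner}$ attribute of every object in $x.\mathit{owns}$ and then sets $x.\mathit{closed}$). The attributes $\mathit{closed}$ and $\mathit{owner}$ are changed only by $\mathit{wrap}$ and $\mathit{unwrap}$. Objects are never deallocated. *)

theory Defs
  imports Main
begin

text \<open>The set of
allocated objects is kept separately from the heap (it is not an attribute).\<close>

record ('ob, 'f, 'v) heap =
  closed    :: "'ob \<Rightarrow> bool"
  owner     :: "'ob \<Rightarrow> 'ob"
  owns      :: "'ob \<Rightarrow> 'ob set"
  subjects  :: "'ob \<Rightarrow> 'ob set"
  observers :: "'ob \<Rightarrow> 'ob set"
  fld       :: "'ob \<Rightarrow> 'f \<Rightarrow> 'v"

definition wrapped :: "('ob, 'f, 'v) heap \<Rightarrow> 'ob \<Rightarrow> bool" where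
  "wrapped h x \<longleftrightarrow> closed h x \<and> \<not> closed h (owner h x)"

definition same_attrs :: "('ob, 'f, 'v) heap \<Rightarrow> ('ob, 'f, 'v) heap \<Rightarrow> 'ob \<Rightarrow> bool" where
  "same_attrs h h' x \<longleftrightarrow>
     closed h x = closed h' x \<and> owner h x = owner h' x \<and> owns h x = owns h' x \<and>
     subjects h x = subjects h' x \<and> observers h x = observers h' x \<and> fld h x = fld h' x"

text \<open>An attribute update "a := y" for an attribute a other than closed and owner.\<close>
datatype ('ob, 'f, 'v) upd =
    UOwns "'ob set" | USubjects "'ob set" | UObservers "'ob set" | UField 'f 'v

fun apply_upd :: "('ob, 'f, 'v) heap \<Rightarrow> 'ob \<Rightarrow> ('ob, 'f, 'v) upd \<Rightarrow> ('ob, 'f, 'v) heap" where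
  "apply_upd h s (UOwns y) = h\<lparr>owns := (owns h)(s := y)\<rparr>"
| "apply_upd h s (USubjects y) = h\<lparr>subjects := (subjects h)(s := y)\<rparr>"
| "apply_upd h s (UObservers y) = h\<lparr>observers := (observers h)(s := y)\<rparr>"
| "apply_upd h s (UField f y) = h\<lparr>fld := (fld h)(s := (fld h s)(f := y))\<rparr>"

text \<open>cinv ob h: the invariant of the class of ob, evaluated on Current = ob in heap h.
 reads ob h: the read set reads(cinv) of that invariant evaluated in h.
 guard h s u ob: the update guard guard(s.a := y, ob) of the update u (= "a := y"),
 evaluated in h.\<close>

definition reads_frame ::
  "('ob \<Rightarrow> ('ob, 'f, 'v) heap \<Rightarrow> bool) \<Rightarrow> ('ob \<Rightarrow> ('ob, 'f, 'v) heap \<Rightarrow> 'ob set) \<Rightarrow> bool" where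
  "reads_frame cinv reads \<longleftrightarrow>
     (\<forall>ob h h'. (\<forall>x\<in>reads ob h. same_attrs h h' x) \<longrightarrow> cinv ob h = cinv ob h')"

definition adm_A1 where
  "adm_A1 cinv reads \<longleftrightarrow>
     (\<forall>ob h. cinv ob h \<longrightarrow> reads ob h \<subseteq> {ob} \<union> owns h ob \<union> subjects h ob)"

definition adm_A2 where
  "adm_A2 cinv \<longleftrightarrow>
     (\<forall>ob h. cinv ob h \<longrightarrow> (\<forall>s. s \<in> subjects h ob \<longrightarrow> ob \<in> observers h s))"

definition adm_A3 where
  "adm_A3 cinv guard \<longleftrightarrow>
     (\<forall>ob h s u. s \<in> subjects h ob \<and> cinv ob h \<and> guard h s u ob \<longrightarrow> cinv ob (apply_upd h s u))"

text \<open>A4 (semantic rendering): the invariant does not depend on closed and owner.\<close>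
definition adm_A4 where
  "adm_A4 cinv \<longleftrightarrow>
     (\<forall>ob h c w. cinv ob (h\<lparr>closed := c, owner := w\<rparr>) = cinv ob h)"

definition admissible ::
  "('ob \<Rightarrow> ('ob, 'f, 'v) heap \<Rightarrow> bool) \<Rightarrow> ('ob \<Rightarrow> ('ob, 'f, 'v) heap \<Rightarrow> 'ob set)
   \<Rightarrow> (('ob, 'f, 'v) heap \<Rightarrow> 'ob \<Rightarrow> ('ob, 'f, 'v) upd \<Rightarrow> 'ob \<Rightarrow> bool) \<Rightarrow> bool" where
  "admissible cinv reads guard \<longleftrightarrow>
     adm_A1 cinv reads \<and> adm_A2 cinv \<and> adm_A3 cinv guard \<and> adm_A4 cinv"

datatype ('ob, 'f, 'v) instr =
    Create 'ob | Unwrap 'ob | Update 'ob "('ob, 'f, 'v) upd" | Wrap 'ob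

text \<open>Preconditions.  Instructions can only target allocated objects; create x
allocates a fresh object x; Void is always open, so it is never wrapped.\<close>
fun pre :: "'ob \<Rightarrow> ('ob \<Rightarrow> ('ob, 'f, 'v) heap \<Rightarrow> bool)
   \<Rightarrow> (('ob, 'f, 'v) heap \<Rightarrow> 'ob \<Rightarrow> ('ob, 'f, 'v) upd \<Rightarrow> 'ob \<Rightarrow> bool)
   \<Rightarrow> ('ob, 'f, 'v) heap \<Rightarrow> 'ob set \<Rightarrow> ('ob, 'f, 'v) instr \<Rightarrow> bool" where
  "pre void cinv guard h A (Create x) = (x \<notin> A)"
| "pre void cinv guard h A (Unwrap x) = (x \<in> A \<and> wrapped h x)"
| "pre void cinv guard h A (Update x u) =
     (x \<in> A \<and> \<not> closed h x \<and> (\<forall>ob\<in>observers h x. \<not> closed h ob \<or> guard h x u ob))"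
| "pre void cinv guard h A (Wrap x) =
     (x \<in> A \<and> x \<noteq> void \<and> \<not> closed h x \<and> cinv x h \<and> (\<forall>ob\<in>owns h x. wrapped h ob))"

text \<open>Effects (each instruction modifies only what its postcondition mentions).\<close>
fun exec :: "'ob \<Rightarrow> ('ob, 'f, 'v) heap \<Rightarrow> 'ob set \<Rightarrow> ('ob, 'f, 'v) instr
   \<Rightarrow> ('ob, 'f, 'v) heap \<times> 'ob set" where
  "exec void h A (Create x) =
     (h\<lparr>closed := (closed h)(x := False), owner := (owner h)(x := void),
        observers := (observers h)(x := {})\<rparr>, insert x A)"
| "exec void h A (Unwrap x) = (h\<lparr>closed := (closed h)(x := False)\<rparr>, A)"
| "exec void h A (Update x u) = (apply_upd h x u, A)"
| "exec void h A (Wrap x) =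
     (h\<lparr>owner := (\<lambda>ob. if ob \<in> owns h x then x else owner h ob),
        closed := (closed h)(x := True)\<rparr>, A)"

inductive reachable :: "'ob \<Rightarrow> ('ob \<Rightarrow> ('ob, 'f, 'v) heap \<Rightarrow> bool)
   \<Rightarrow> (('ob, 'f, 'v) heap \<Rightarrow> 'ob \<Rightarrow> ('ob, 'f, 'v) upd \<Rightarrow> 'ob \<Rightarrow> bool)
   \<Rightarrow> ('ob, 'f, 'v) heap \<times> 'ob set \<Rightarrow> bool"
  for void cinv guard where
  init: "\<lbrakk>\<forall>ob. \<not> closed h ob; \<forall>ob. ob \<noteq> void \<longrightarrow> observers h ob = {}\<rbrakk>
         \<Longrightarrow> reachable void cinv guard (h, {void})"
| step: "\<lbrakk>reachable void cinv guard (h, A); pre void cinv guard h A i\<rbrakk>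
         \<Longrightarrow> reachable void cinv guard (exec void h A i)"

end

theory Submission
  imports Defs
begin

definition INV :: "('ob \<Rightarrow> ('ob, 'f, 'v) heap \<Rightarrow> bool) \<Rightarrow> ('ob, 'f, 'v) heap \<Rightarrow> 'ob set \<Rightarrow> bool" where
  "INV cinv h A \<longleftrightarrow> (\<forall>ob. closed h ob \<longrightarrow> cinv ob h) \<and>
         (\<forall>ob p. closed h p \<and> ob \<in> owns h p \<longrightarrow> closed h ob \<and> owner h ob = p) \<and>
         (\<forall>ob. ob \<notin> A \<longrightarrow> \<not> closed h ob \<and> observers h ob = {})"

lemma A4': "adm_A4 cinv \<Longrightarrow> cinv ob (h\<lparr>closed := c, owner := w\<rparr>) = cinv ob h"
  by (simp add: adm_A4_def)

lemma A4c: "adm_A4 cinv \<Longrightarrow> cinv ob (h\<lparr>closed := c\<rparr>) = cinv ob h"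
  using A4'[where cinv=cinv and ob=ob and h=h and c=c and w="owner h"] by simp

lemma A4o: assumes a: "adm_A4 cinv" shows "cinv ob (h\<lparr>owner := w, closed := c\<rparr>) = cinv ob h"
proof -
  have eq: "h\<lparr>owner := w, closed := c\<rparr> = h\<lparr>closed := c, owner := w\<rparr>" by (cases h) simp
  show ?thesis unfolding eq by (rule A4'[OF a])
qed

lemma upd_same: "y \<noteq> x \<Longrightarrow> same_attrs h (apply_upd h x u) y"
  by (cases u) (auto simp: same_attrs_def)

lemma upd_basic: "closed (apply_upd h x u) = closed h" "owner (apply_upd h x u) = owner h"
  "y \<noteq> x \<Longrightarrow> owns (apply_upd h x u) y = owns h y"
  "y \<noteq> x \<Longrightarrow> observers (apply_upd h x u) y = observers h y"
  by (cases u; simp)+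

lemma step_inv:
  assumes fr: "reads_frame cinv reads" and adm: "admissible cinv reads guard"
    and I: "INV cinv h A" and P: "pre void cinv guard h A i"
  shows "INV cinv (fst (exec void h A i)) (snd (exec void h A i))"
proof -
  from adm have a1: "adm_A1 cinv reads" and a2: "adm_A2 cinv" and a3: "adm_A3 cinv guard"
    and a4: "adm_A4 cinv" by (auto simp: admissible_def)
  from I have g1: "\<And>ob. closed h ob \<Longrightarrow> cinv ob h"
    and g2: "\<And>ob p. closed h p \<Longrightarrow> ob \<in> owns h p \<Longrightarrow> closed h ob \<and> owner h ob = p"
    and g3: "\<And>ob. ob \<notin> A \<Longrightarrow> \<not> closed h ob \<and> observers h ob = {}"
    by (auto simp: INV_def)
  show ?thesis
  proof (cases i)
    case (Create x)
    let ?h' = "h\<lparr>closed := (closed h)(x := False), owner := (owner h)(x := void),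
        observers := (observers h)(x := {})\<rparr>"
    from P Create have xA: "x \<notin> A" by simp
    with g3 have xo: "\<not> closed h x" "observers h x = {}" by auto
    have "cinv p ?h'" if cp: "closed h p" for p
    proof -
      have ci: "cinv p h" using g1 cp .
      have "x \<notin> reads p h"
      proof
        assume "x \<in> reads p h"
        with a1 ci have "x \<in> {p} \<union> owns h p \<union> subjects h p" by (auto simp: adm_A1_def)
        moreover have "x \<noteq> p" using cp xo by auto
        moreover have "x \<notin> owns h p" using g2[OF cp] xo by auto
        moreover have "x \<notin> subjects h p" using a2 ci xo by (auto simp: adm_A2_def)
        ultimately show False by auto
      qed
      hence "\<forall>y\<in>reads p h. same_attrs h ?h' y" by (auto simp: same_attrs_def)
      with fr ci show ?thesis by (auto simp: reads_frame_def)
    qed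
    moreover have "x \<noteq> p" if "closed h p" for p using that xo by auto
    ultimately show ?thesis using Create g2 g3 xo
      by (auto simp: INV_def)
  next
    case (Unwrap x)
    with P have w: "wrapped h x" by simp
    show ?thesis using Unwrap g1 g2 g3 w a4 A4c[OF a4]
      by (auto simp: INV_def wrapped_def)
  next
    case (Update x u)
    with P have xA: "x \<in> A" and xo: "\<not> closed h x"
      and gd: "\<forall>ob\<in>observers h x. \<not> closed h ob \<or> guard h x u ob" by auto
    let ?h' = "apply_upd h x u"
    have "cinv p ?h'" if cp: "closed h p" for p
    proof -
      have ci: "cinv p h" using g1 cp .
      show ?thesis
      proof (cases "x \<in> subjects h p")
        case True
        with a2 ci have "p \<in> observers h x" by (auto simp: adm_A2_def)
        with gd cp have "guard h x u p" by auto
        with a3 True ci show ?thesis by (auto simp: adm_A3_def)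
      next
        case False
        have "x \<notin> reads p h"
        proof
          assume "x \<in> reads p h"
          with a1 ci have "x \<in> {p} \<union> owns h p \<union> subjects h p" by (auto simp: adm_A1_def)
          moreover have "x \<noteq> p" using cp xo by auto
          moreover have "x \<notin> owns h p" using g2[OF cp] xo by auto
          ultimately show False using False by auto
        qed
        hence "\<forall>y\<in>reads p h. same_attrs h ?h' y" using upd_same by metis
        with fr ci show ?thesis by (auto simp: reads_frame_def)
      qed
    qed
    moreover have "x \<noteq> p" if "closed h p" for p using that xo by auto
    moreover have "\<And>p. closed h p \<Longrightarrow> owns ?h' p = owns h p"
      using xo by (metis upd_basic(3))
    moreover have "\<And>ob. ob \<notin> A \<Longrightarrow> observers ?h' ob = observers h ob"
      using xA by (metis upd_basic(4))
    ultimately show ?thesis using Update g2 g3 xA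
      by (auto simp: INV_def upd_basic)
  next
    case (Wrap x)
    with P have xo: "\<not> closed h x" and cx: "cinv x h" and ow: "\<forall>ob\<in>owns h x. wrapped h ob"
      and xA: "x \<in> A" by auto
    show ?thesis using Wrap g1 g2 g3 xo cx ow xA A4o[OF a4]
      by (auto simp: INV_def wrapped_def)
  qed
qed

lemma reach_inv:
  assumes fr: "reads_frame cinv reads" and adm: "admissible cinv reads guard"
  shows "reachable void cinv guard s \<Longrightarrow> INV cinv (fst s) (snd s)"
proof (induction rule: reachable.induct)
  case (init h)
  then show ?case by (auto simp: INV_def)
next
  case (step h A i)
  then show ?case using step_inv[OF fr adm] by auto
qed

theorem proposition1:
  fixes void :: 'ob
    and cinv :: "'ob \<Rightarrow> ('ob, 'f, 'v) heap \<Rightarrow> bool"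
    and reads :: "'ob \<Rightarrow> ('ob, 'f, 'v) heap \<Rightarrow> 'ob set"
    and guard :: "('ob, 'f, 'v) heap \<Rightarrow> 'ob \<Rightarrow> ('ob, 'f, 'v) upd \<Rightarrow> 'ob \<Rightarrow> bool"
  assumes "reads_frame cinv reads"
    and "admissible cinv reads guard"
    and "reachable void cinv guard (h, A)"
  shows "(\<forall>ob. closed h ob \<longrightarrow> cinv ob h) \<and>
         (\<forall>ob p. closed h p \<and> ob \<in> owns h p \<longrightarrow> closed h ob \<and> owner h ob = p)"
  using reach_inv[OF assms(1,2) assms(3)] by (auto simp: INV_def)

end
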